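(* Let $\mathcal C$ be a small cancellative category (all morphisms are monomorphisms and epimorphisms). If $\mathcal C$ contains no nonidentity retractions, then for every morphism $\alpha$ of $\mathcal C$ the comma category $\mathfrak F\mathcal C/\alpha$ is a partially ordered set.
   Context: The factorization category $\mathfrak F\mathcal C$ has the morphisms of $\mathcal C$ as objects; for $\alpha:a\to b$ and $\beta:a'\to b'$, a morphism $\alpha\to\beta$ is a pair $(f,g)$ with $f:a'\to a$, $g:b\to b'$ and $g\circ\alpha\circ f=\beta$; composition of $(f_1,g_1):\alpha\to\beta$ and $(f_2,g_2):\beta\to\gamma$ is $(f_1\circ f_2,g_2\circ g_1)$. The comma category $\mathfrak F\mathcal C/\alpha$ has objects pairs $(\beta,\varphi)$ with $\varphi:\beta\to\alpha$ in $\mathfrak F\mathcal C$, and morphisms $\psi:\beta\to\beta'$ with $\varphi'\circ\psi=\varphi$. A retraction is a morphism $r$ for which there is $s$ with $r\circ s$ an identity. A small category is a partially ordered set if between any two objects there is at most one morphism and objects with morphisms in both directions coincide. *)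

theory Defs
  imports Main
begin

text \<open>A small category: a set of objects, a set of morphisms, domain, codomain,
  composition (Comp g f means g \<circ> f, defined when Cod f = Dom g) and identities.\<close>

record ('o, 'm) cat =
  Obj  :: "'o set"
  Arr  :: "'m set"
  Dom  :: "'m \<Rightarrow> 'o"
  Cod  :: "'m \<Rightarrow> 'o"
  Comp :: "'m \<Rightarrow> 'm \<Rightarrow> 'm"
  Id   :: "'o \<Rightarrow> 'm"

definition Hom :: "('o, 'm) cat \<Rightarrow> 'o \<Rightarrow> 'o \<Rightarrow> 'm set" where
  "Hom C a b = {f \<in> Arr C. Dom C f = a \<and> Cod C f = b}"

definition category :: "('o, 'm) cat \<Rightarrow> bool" where
  "category C \<longleftrightarrow>
     (\<forall>f \<in> Arr C. Dom C f \<in> Obj C \<and> Cod C f \<in> Obj C)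
   \<and> (\<forall>a \<in> Obj C. Id C a \<in> Hom C a a)
   \<and> (\<forall>f \<in> Arr C. \<forall>g \<in> Arr C. Cod C f = Dom C g \<longrightarrow>
        Comp C g f \<in> Hom C (Dom C f) (Cod C g))
   \<and> (\<forall>f \<in> Arr C. \<forall>g \<in> Arr C. \<forall>h \<in> Arr C. Cod C f = Dom C g \<and> Cod C g = Dom C h \<longrightarrow>
        Comp C h (Comp C g f) = Comp C (Comp C h g) f)
   \<and> (\<forall>f \<in> Arr C. Comp C (Id C (Cod C f)) f = f \<and> Comp C f (Id C (Dom C f)) = f)"

definition cancellative :: "('o, 'm) cat \<Rightarrow> bool" where
  "cancellative C \<longleftrightarrow>
     (\<forall>h \<in> Arr C. \<forall>f \<in> Arr C. \<forall>g \<in> Arr C.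
        Cod C f = Dom C h \<and> Cod C g = Dom C h \<and> Dom C f = Dom C g \<and>
        Comp C h f = Comp C h g \<longrightarrow> f = g)
   \<and> (\<forall>h \<in> Arr C. \<forall>f \<in> Arr C. \<forall>g \<in> Arr C.
        Dom C f = Cod C h \<and> Dom C g = Cod C h \<and> Cod C f = Cod C g \<and>
        Comp C f h = Comp C g h \<longrightarrow> f = g)"

definition retraction :: "('o, 'm) cat \<Rightarrow> 'm \<Rightarrow> bool" where
  "retraction C r \<longleftrightarrow> r \<in> Arr C \<and>
     (\<exists>s \<in> Arr C. Cod C s = Dom C r \<and> (\<exists>a \<in> Obj C. Comp C r s = Id C a))"

definition is_identity :: "('o, 'm) cat \<Rightarrow> 'm \<Rightarrow> bool" where
  "is_identity C f \<longleftrightarrow> (\<exists>a \<in> Obj C. f = Id C a)"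

definition FHom :: "('o, 'm) cat \<Rightarrow> 'm \<Rightarrow> 'm \<Rightarrow> ('m \<times> 'm) set" where
  "FHom C \<alpha> \<beta> = {(f, g). f \<in> Hom C (Dom C \<beta>) (Dom C \<alpha>) \<and> g \<in> Hom C (Cod C \<alpha>) (Cod C \<beta>)
                      \<and> Comp C g (Comp C \<alpha> f) = \<beta>}"

definition FComp :: "('o, 'm) cat \<Rightarrow> 'm \<times> 'm \<Rightarrow> 'm \<times> 'm \<Rightarrow> 'm \<times> 'm" where
  "FComp C p q = (Comp C (fst p) (fst q), Comp C (snd q) (snd p))"
  \<comment> \<open>p : \<alpha> \<rightarrow> \<beta> first, q : \<beta> \<rightarrow> \<gamma> second\<close>

definition CommaObj :: "('o, 'm) cat \<Rightarrow> 'm \<Rightarrow> ('m \<times> ('m \<times> 'm)) set" where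
  "CommaObj C \<alpha> = {(\<beta>, \<phi>). \<beta> \<in> Arr C \<and> \<phi> \<in> FHom C \<beta> \<alpha>}"

definition CommaHom :: "('o, 'm) cat \<Rightarrow> 'm \<times> ('m \<times> 'm) \<Rightarrow> 'm \<times> ('m \<times> 'm) \<Rightarrow> ('m \<times> 'm) set" where
  "CommaHom C X Y = {\<psi> \<in> FHom C (fst X) (fst Y). FComp C \<psi> (snd Y) = snd X}"

definition is_poset :: "'x set \<Rightarrow> ('x \<Rightarrow> 'x \<Rightarrow> 'h set) \<Rightarrow> bool" where
  "is_poset Ob H \<longleftrightarrow>
     (\<forall>X \<in> Ob. \<forall>Y \<in> Ob. \<forall>u \<in> H X Y. \<forall>v \<in> H X Y. u = v)
   \<and> (\<forall>X \<in> Ob. \<forall>Y \<in> Ob. H X Y \<noteq> {} \<and> H Y X \<noteq> {} \<longrightarrow> X = Y)"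

end

theory Submission
  imports Defs
begin

lemma cat_Id: "category C \<Longrightarrow> a \<in> Obj C \<Longrightarrow> Id C a \<in> Arr C \<and> Dom C (Id C a) = a \<and> Cod C (Id C a) = a"
  unfolding category_def Hom_def by auto

lemma cat_obj: "category C \<Longrightarrow> f \<in> Arr C \<Longrightarrow> Dom C f \<in> Obj C \<and> Cod C f \<in> Obj C"
  unfolding category_def by auto

lemma cat_comp: "category C \<Longrightarrow> f \<in> Arr C \<Longrightarrow> g \<in> Arr C \<Longrightarrow> Cod C f = Dom C g \<Longrightarrow>
   Comp C g f \<in> Arr C \<and> Dom C (Comp C g f) = Dom C f \<and> Cod C (Comp C g f) = Cod C g"
  unfolding category_def Hom_def by auto

lemma cat_assoc: "category C \<Longrightarrow> f \<in> Arr C \<Longrightarrow> g \<in> Arr C \<Longrightarrow> h \<in> Arr C \<Longrightarrow>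
   Cod C f = Dom C g \<Longrightarrow> Cod C g = Dom C h \<Longrightarrow>
   Comp C h (Comp C g f) = Comp C (Comp C h g) f"
  unfolding category_def by blast

lemma cat_idl: "category C \<Longrightarrow> f \<in> Arr C \<Longrightarrow> Comp C (Id C (Cod C f)) f = f"
  unfolding category_def by blast

lemma cat_idr: "category C \<Longrightarrow> f \<in> Arr C \<Longrightarrow> Comp C f (Id C (Dom C f)) = f"
  unfolding category_def by blast

lemma mono: "cancellative C \<Longrightarrow> h \<in> Arr C \<Longrightarrow> f \<in> Arr C \<Longrightarrow> g \<in> Arr C \<Longrightarrow>
   Cod C f = Dom C h \<Longrightarrow> Cod C g = Dom C h \<Longrightarrow> Dom C f = Dom C g \<Longrightarrow>
   Comp C h f = Comp C h g \<Longrightarrow> f = g"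
  unfolding cancellative_def by blast

lemma epi: "cancellative C \<Longrightarrow> h \<in> Arr C \<Longrightarrow> f \<in> Arr C \<Longrightarrow> g \<in> Arr C \<Longrightarrow>
   Dom C f = Cod C h \<Longrightarrow> Dom C g = Cod C h \<Longrightarrow> Cod C f = Cod C g \<Longrightarrow>
   Comp C f h = Comp C g h \<Longrightarrow> f = g"
  unfolding cancellative_def by blast

lemma ret_id:
  assumes C: "category C" and R: "\<forall>r. retraction C r \<longrightarrow> is_identity C r"
    and r: "r \<in> Arr C" and s: "s \<in> Arr C" and cs: "Cod C s = Dom C r"
    and rs: "Comp C r s = Id C (Dom C s)"
  shows "r = Id C (Dom C r)" "Dom C r = Cod C r"
proof -
  have "Dom C s \<in> Obj C" using cat_obj[OF C s] by auto
  hence "retraction C r" unfolding retraction_def using r s cs rs by blast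
  then obtain a where a: "a \<in> Obj C" "r = Id C a" using R unfolding is_identity_def by blast
  thus "r = Id C (Dom C r)" "Dom C r = Cod C r" using cat_Id[OF C a(1)] by auto
qed

theorem mainTheorem14:
  fixes C :: "('o, 'm) cat" and \<alpha> :: 'm
  assumes "category C"
    and "cancellative C"
    and "\<forall>r. retraction C r \<longrightarrow> is_identity C r"
    and "\<alpha> \<in> Arr C"
  shows "is_poset (CommaObj C \<alpha>) (CommaHom C)"
proof -
  note C = assms(1) and K = assms(2) and R = assms(3)
  have uniq: "u = v" if X: "X \<in> CommaObj C \<alpha>" and Y: "Y \<in> CommaObj C \<alpha>"
    and u: "u \<in> CommaHom C X Y" and v: "v \<in> CommaHom C X Y" for X Y u v
  proof -
    obtain \<beta> f g where Xe: "X = (\<beta>, (f, g))" by (cases X) auto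
    obtain \<beta>' f' g' where Ye: "Y = (\<beta>', (f', g'))" by (cases Y) auto
    obtain p q where ue: "u = (p, q)" by (cases u) auto
    obtain p' q' where ve: "v = (p', q')" by (cases v) auto
    from X Y u v show ?thesis unfolding Xe Ye ue ve CommaObj_def CommaHom_def FHom_def FComp_def Hom_def
      apply clarsimp
      apply (intro conjI)
       apply (rule epi[OF K, of f']; simp)
      apply (rule mono[OF K, of g']; simp)
      done
  qed
  have anti: "X = Y" if X: "X \<in> CommaObj C \<alpha>" and Y: "Y \<in> CommaObj C \<alpha>"
    and u: "u \<in> CommaHom C X Y" and v: "v \<in> CommaHom C Y X" for X Y u v
  proof -
    obtain \<beta> f g where Xe: "X = (\<beta>, (f, g))" by (cases X) auto
    obtain \<beta>' f' g' where Ye: "Y = (\<beta>', (f', g'))" by (cases Y) auto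
    obtain p q where ue: "u = (p, q)" by (cases u) auto
    obtain p' q' where ve: "v = (p', q')" by (cases v) auto
    from X Y u v have H:
      "\<beta> \<in> Arr C" "\<beta>' \<in> Arr C"
      "f \<in> Arr C" "Dom C f = Dom C \<alpha>" "Cod C f = Dom C \<beta>"
      "g \<in> Arr C" "Dom C g = Cod C \<beta>" "Cod C g = Cod C \<alpha>"
      "Comp C g (Comp C \<beta> f) = \<alpha>"
      "f' \<in> Arr C" "Dom C f' = Dom C \<alpha>" "Cod C f' = Dom C \<beta>'"
      "g' \<in> Arr C" "Dom C g' = Cod C \<beta>'" "Cod C g' = Cod C \<alpha>"
      "Comp C g' (Comp C \<beta>' f') = \<alpha>"
      "p \<in> Arr C" "Dom C p = Dom C \<beta>'" "Cod C p = Dom C \<beta>"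
      "q \<in> Arr C" "Dom C q = Cod C \<beta>" "Cod C q = Cod C \<beta>'"
      "Comp C q (Comp C \<beta> p) = \<beta>'"
      "Comp C p f' = f" "Comp C g' q = g"
      "p' \<in> Arr C" "Dom C p' = Dom C \<beta>" "Cod C p' = Dom C \<beta>'"
      "q' \<in> Arr C" "Dom C q' = Cod C \<beta>'" "Cod C q' = Cod C \<beta>"
      "Comp C q' (Comp C \<beta>' p') = \<beta>"
      "Comp C p' f = f'" "Comp C g q' = g'"
      unfolding Xe Ye ue ve CommaObj_def CommaHom_def FHom_def FComp_def Hom_def by auto
    have pp: "Comp C p p' = Id C (Dom C p')"
    proof (rule epi[OF K, of f])
      show "Comp C (Comp C p p') f = Comp C (Id C (Dom C p')) f"
        using cat_assoc[OF C, of f p' p] cat_idl[OF C, of f] H by simp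
    qed (use H cat_comp[OF C, of p' p] cat_Id[OF C] cat_obj[OF C] in auto)
    have p1: "p = Id C (Dom C p)" "Dom C p = Cod C p"
      using ret_id[OF C R, of p p'] pp H by auto
    have qq: "Comp C q q' = Id C (Dom C q')"
    proof (rule mono[OF K, of g'])
      show "Comp C g' (Comp C q q') = Comp C g' (Id C (Dom C q'))"
        using cat_assoc[OF C, of q' q g'] cat_idr[OF C, of g'] H by simp
    qed (use H cat_comp[OF C, of q' q] cat_Id[OF C] cat_obj[OF C] in auto)
    have q1: "q = Id C (Dom C q)" "Dom C q = Cod C q"
      using ret_id[OF C R, of q q'] qq H by auto
    have bb: "\<beta>' = \<beta>"
    proof -
      have "Comp C \<beta> p = \<beta>" using p1 H cat_idr[OF C, of \<beta>] by metis
      moreover have "Comp C q \<beta> = \<beta>" using q1 H cat_idl[OF C, of \<beta>] by metis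
      ultimately show ?thesis using H(23) by simp
    qed
    have "f' = f" using p1 H cat_idl[OF C, of f'] bb by metis
    moreover have "g' = g" using q1 H cat_idr[OF C, of g'] bb by metis
    ultimately show ?thesis using Xe Ye bb by simp
  qed
  show ?thesis unfolding is_poset_def using uniq anti by blast
qed

end
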